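(* For every $c\geq1$, $$|UD_2((1,2,c))|=3\cdot2^{c+1}-2F_{c+4}-2(c)_2,$$ where $F_k$ is the $k$-th Fibonacci number ($F_0=0$, $F_1=1$, $F_k=F_{k-1}+F_{k-2}$) and $(c)_2\in\{0,1\}$ is the remainder of $c$ modulo $2$. Consequently, for every $c\geq2$, $$\rho_{2,(1,2,c)}=\frac{2^c}{3\cdot2^{c+1}-2F_{c+4}-2(c)_2}.$$
   Context: Let $X$ be a finite alphabet with $n\geq 2$ letters and $X^*$ the set of words over $X$; $|v|$ is the length of a word $v$. A code over $X$ is a finite sequence $C=(v_1,\ldots,v_m)$ of words over $X$ such that every $w\in X^*$ has at most one factorization into code-words: if $w=v_{i_1}\cdots v_{i_l}=v_{j_1}\cdots v_{j_{l'}}$ with $l,l'\geq1$, then $l=l'$ and $i_t=j_t$ for all $t$. (Codes are sequences, not sets.) A code $C=(v_1,\ldots,v_m)$ is a prefix code if for all $i,j$, $v_i$ is a prefix of $v_j$ if and only if $i=j$. For a finite sequence $L=(a_1,\ldots,a_m)$ of positive integers, $UD_n(L)$ is the set of all codes $(v_1,\ldots,v_m)$ over an $n$-letter alphabet with $|v_i|=a_i$ for all $i$, $PR_n(L)\subseteq UD_n(L)$ is the subset of prefix codes, and $\rho_{n,L}=|PR_n(L)|/|UD_n(L)|$. *)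

theory Defs
  imports Main "HOL-Library.Sublist" "HOL-Number_Theory.Fib"
begin

definition is_code :: "nat list list \<Rightarrow> bool" where
  "is_code C \<longleftrightarrow>
     (\<forall>is js. is \<noteq> [] \<longrightarrow> js \<noteq> [] \<longrightarrow>
        set is \<subseteq> {..<length C} \<longrightarrow> set js \<subseteq> {..<length C} \<longrightarrow>
        concat (map (\<lambda>i. C ! i) is) = concat (map (\<lambda>j. C ! j) js) \<longrightarrow> is = js)"

definition is_prefix_code :: "nat list list \<Rightarrow> bool" where
  "is_prefix_code C \<longleftrightarrow>
     (\<forall>i<length C. \<forall>j<length C. prefix (C ! i) (C ! j) \<longleftrightarrow> i = j)"

definition UD :: "nat \<Rightarrow> nat list \<Rightarrow> nat list list set" where
  "UD n L = {C. length C = length L \<and>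
              (\<forall>i<length C. length (C ! i) = L ! i \<and> set (C ! i) \<subseteq> {..<n}) \<and>
              is_code C}"

definition PR :: "nat \<Rightarrow> nat list \<Rightarrow> nat list list set" where
  "PR n L = {C \<in> UD n L. is_prefix_code C}"

definition rho :: "nat \<Rightarrow> nat list \<Rightarrow> real" where
  "rho n L = real (card (PR n L)) / real (card (UD n L))"

end

theory Submission
  imports Defs
begin


lemma code_intro:
  assumes ne: "\<forall>i<length C. C!i \<noteq> []"
  and first: "\<And>i j is js. i < length C \<Longrightarrow> j < length C \<Longrightarrow> set is \<subseteq> {..<length C} \<Longrightarrow> set js \<subseteq> {..<length C}
     \<Longrightarrow> C!i @ concat (map (\<lambda>k. C!k) is) = C!j @ concat (map (\<lambda>k. C!k) js) \<Longrightarrow> i = j"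
  shows "is_code C"
proof -
  have key: "\<And>js. set is \<subseteq> {..<length C} \<Longrightarrow> set js \<subseteq> {..<length C} \<Longrightarrow>
     concat (map (\<lambda>k. C!k) is) = concat (map (\<lambda>k. C!k) js) \<Longrightarrow> is = js" for "is"
  proof (induction "is")
    case Nil
    then show ?case using ne by (cases js) auto
  next
    case (Cons i is')
    show ?case
    proof (cases js)
      case Nil
      then show ?thesis using Cons.prems ne by auto
    next
      case (Cons j js')
      have ij: "i = j" using first[of i j is' js'] Cons Cons.prems by auto
      then have "is' = js'" using Cons.IH[of js'] Cons Cons.prems by auto
      then show ?thesis using ij Cons by simp
    qed
  qed
  show ?thesis unfolding is_code_def using key by blast
qed

lemma code_rev:
  assumes "is_code C" shows "is_code (map rev C)"
  unfolding is_code_def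
proof (intro allI impI)
  fix "is" js
  assume h: "is \<noteq> []" "js \<noteq> []" "set is \<subseteq> {..<length (map rev C)}" "set js \<subseteq> {..<length (map rev C)}"
    "concat (map ((!) (map rev C)) is) = concat (map ((!) (map rev C)) js)"
  have e: "concat (map ((!) (map rev C)) xs) = rev (concat (map ((!) C) (rev xs)))"
    if "set xs \<subseteq> {..<length C}" for xs
    using that by (induction xs) auto
  have "concat (map ((!) C) (rev is)) = concat (map ((!) C) (rev js))"
    using h e[of "is"] e[of js] by simp
  then have "rev is = rev js" using assms[unfolded is_code_def, rule_format, of "rev is" "rev js"] h by auto
  then show "is = js" by simp
qed

lemma code_rev_iff: "is_code (map rev C) = is_code C"
  using code_rev[of C] code_rev[of "map rev C"] by (auto simp: rev_map[symmetric] o_def)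

definition sw :: "nat \<Rightarrow> nat" where "sw x = (if x = 0 then 1 else if x = 1 then 0 else x)"

lemma sw_sw[simp]: "sw (sw x) = x" by (simp add: sw_def)
lemma inj_sw: "inj sw" by (metis injI sw_sw)
lemma map_sw_sw[simp]: "map sw (map sw xs) = xs" by (induction xs) auto
lemma sw01[simp]: "sw 0 = 1" "sw 1 = 0" by (auto simp: sw_def)

lemma code_sw:
  assumes "is_code C" shows "is_code (map (map sw) C)"
  unfolding is_code_def
proof (intro allI impI)
  fix "is" js
  assume h: "is \<noteq> []" "js \<noteq> []" "set is \<subseteq> {..<length (map (map sw) C)}" "set js \<subseteq> {..<length (map (map sw) C)}"
    "concat (map ((!) (map (map sw) C)) is) = concat (map ((!) (map (map sw) C)) js)"
  have e: "concat (map ((!) (map (map sw) C)) xs) = map sw (concat (map ((!) C) xs))"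
    if "set xs \<subseteq> {..<length C}" for xs
    using that by (induction xs) auto
  have "map sw (concat (map ((!) C) is)) = map sw (concat (map ((!) C) js))"
    using h e[of "is"] e[of js] by simp
  then have "concat (map ((!) C) is) = concat (map ((!) C) js)"
    by (metis map_sw_sw)
  then show "is = js" using assms[unfolded is_code_def, rule_format, of "is" js] h by auto
qed

lemma code_sw_iff: "is_code (map (map sw) C) = is_code C"
  using code_sw[of C] code_sw[of "map (map sw) C"] by (auto simp: o_def)

lemma pre_sw: "prefix (map sw a) (map sw b) = prefix a b"
  using map_mono_prefix[of "map sw a" "map sw b" sw] map_mono_prefix[of a b sw] by (auto simp: comp_def)

lemma prefix_code_sw:
  assumes "is_prefix_code C" shows "is_prefix_code (map (map sw) C)"
  using assms unfolding is_prefix_code_def by (simp add: pre_sw)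

lemma prefix_code_sw_iff: "is_prefix_code (map (map sw) C) = is_prefix_code C"
  using prefix_code_sw[of C] prefix_code_sw[of "map (map sw) C"] by (auto simp: o_def)

lemma prefix_code_code:
  assumes "is_prefix_code C" "\<forall>i<length C. C!i \<noteq> []"
  shows "is_code C"
proof (rule code_intro[OF assms(2)])
  fix i j "is" js
  assume "i < length C" "j < length C" "C ! i @ concat (map ((!) C) is) = C ! j @ concat (map ((!) C) js)"
  then have p2: "prefix (C!j) (C!i @ concat (map ((!) C) is))" by (metis prefixI)
  have p1: "prefix (C!i) (C!i @ concat (map ((!) C) is))" by simp
  have "prefix (C!i) (C!j) \<or> prefix (C!j) (C!i)"
    using prefix_same_cases[OF p1 p2] .
  then show "i = j" using assms(1) \<open>i < length C\<close> \<open>j < length C\<close> unfolding is_prefix_code_def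
    by blast
qed

lemma concat_map_rep: "concat (map f (concat (replicate n p))) = concat (replicate n (concat (map f p)))"
  by (induction n) auto

lemma prefix_period:
  assumes "prefix w (P @ w)" shows "prefix w (concat (replicate n P) @ w)"
proof (induction n)
  case 0 then show ?case by simp
next
  case (Suc n)
  have "prefix (concat (replicate n P) @ w) (concat (replicate n P) @ P @ w)"
    using assms by simp
  moreover have "concat (replicate (Suc n) P) @ w = concat (replicate n P) @ P @ w"
    by (simp add: replicate_append_same[symmetric])
  ultimately show ?case using Suc.IH by (metis prefix_order.trans)
qed

lemma pref_lemma:
  fixes x y w :: "nat list"
  assumes ps: "set ps \<subseteq> {..<3}" "ps \<noteq> []" "hd ps \<noteq> 2"
    and ne: "x \<noteq> []" "y \<noteq> []"
    and eq: "w @ X = concat (map ((!) [x,y,w]) ps)"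
  shows "\<exists>is z. set is \<subseteq> {0,1} \<and> concat (map ((!) [x,y,w]) is) = w @ z"
proof -
  define C where "C = [x,y,w]"
  define p where "p = takeWhile (\<lambda>i. i \<noteq> 2) ps"
  define r where "r = dropWhile (\<lambda>i. i \<noteq> 2) ps"
  have psr: "ps = p @ r" unfolding p_def r_def by simp
  have setp: "set p \<subseteq> {0,1}" using ps(1) set_takeWhileD unfolding p_def by fastforce
  have pne: "p \<noteq> []" using ps(2,3) unfolding p_def by (cases ps) auto
  show ?thesis
  proof (cases "r = []")
    case True
    then show ?thesis using eq psr setp by (intro exI[of _ p] exI[of _ X]) simp
  next
    case False
    then obtain r' where r': "r = 2 # r'" unfolding r_def
      by (metis (mono_tags, lifting) dropWhile_eq_Nil_conv hd_dropWhile list.collapse)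
    define P where "P = concat (map ((!) C) p)"
    have Pne: "P \<noteq> []" using pne setp ne unfolding P_def C_def
      by (cases p) auto
    have "w @ X = P @ w @ concat (map ((!) C) r')" using eq psr r' unfolding P_def C_def by simp
    then have "prefix w (P @ w)"
      by (metis append.assoc le_add2 length_append prefix_length_prefix prefixI)
    then have pw: "prefix w (concat (replicate (length w) P) @ w)" by (rule prefix_period)
    have "length (concat (replicate (length w) P)) \<ge> length w"
      using Pne by (simp add: length_concat sum_list_replicate) (metis Suc_le_eq length_greater_0_conv mult.commute mult_le_mono2 nat_mult_1_right)
    then have "prefix w (concat (replicate (length w) P))"
      using pw by (meson prefix_append prefix_length_prefix prefix_order.refl)
    then obtain z where "concat (replicate (length w) P) = w @ z" by (auto simp: prefix_def)
    moreover have "set (concat (replicate (length w) p)) \<subseteq> {0,1}" using setp by auto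
    ultimately show ?thesis unfolding P_def C_def
      by (intro exI[of _ "concat (replicate (length w) p)"] exI[of _ z]) (simp add: concat_map_rep)
  qed
qed

lemma code_G:
  fixes x y w :: "nat list"
  assumes ne: "x \<noteq> []" "y \<noteq> []" "w \<noteq> []" and pxy: "\<not> prefix x y" "\<not> prefix y x"
    and np: "\<not>(\<exists>is z. set is \<subseteq> {0,1} \<and> concat (map ((!) [x,y,w]) is) = w @ z)"
  shows "is_code [x,y,w]"
proof (rule code_intro)
  show "\<forall>i<length [x,y,w]. [x,y,w]!i \<noteq> []" using ne by (auto simp: less_Suc_eq nth_Cons')
next
  fix i j "is" js
  assume h: "i < length [x,y,w]" "j < length [x,y,w]" "set is \<subseteq> {..<length [x,y,w]}"
    "set js \<subseteq> {..<length [x,y,w]}"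
    "[x,y,w] ! i @ concat (map ((!) [x,y,w]) is) = [x,y,w] ! j @ concat (map ((!) [x,y,w]) js)"
  show "i = j"
  proof (rule ccontr)
    assume ij: "i \<noteq> j"
    have i3: "i = 0 \<or> i = 1 \<or> i = 2" "j = 0 \<or> j = 1 \<or> j = 2" using h(1,2) by auto
    show False
    proof (cases "i = 2 \<or> j = 2")
      case True
      then show False
      proof
        assume i2: "i = 2"
        have "w @ concat (map ((!) [x,y,w]) is) = concat (map ((!) [x,y,w]) (j # js))"
          using h(5) i2 by simp
        moreover have "set (j#js) \<subseteq> {..<3}" using h(2,4) by auto
        ultimately have "\<exists>is z. set is \<subseteq> {0,1} \<and> concat (map ((!) [x,y,w]) is) = w @ z"
          using pref_lemma[of "j#js" x y w "concat (map ((!) [x,y,w]) is)"] ij ne i2 by auto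
        then show False using np by blast
      next
        assume j2: "j = 2"
        have "w @ concat (map ((!) [x,y,w]) js) = concat (map ((!) [x,y,w]) (i # is))"
          using h(5) j2 by simp
        moreover have "set (i#is) \<subseteq> {..<3}" using h(1,3) by auto
        ultimately have "\<exists>is z. set is \<subseteq> {0,1} \<and> concat (map ((!) [x,y,w]) is) = w @ z"
          using pref_lemma[of "i#is" x y w "concat (map ((!) [x,y,w]) js)"] ij ne j2 by auto
        then show False using np by blast
      qed
    next
      case False
      then have "(i = 0 \<and> j = 1) \<or> (i = 1 \<and> j = 0)" using i3 ij by auto
      then have "x @ concat (map ((!) [x,y,w]) is) = y @ concat (map ((!) [x,y,w]) js) \<or>
                 y @ concat (map ((!) [x,y,w]) is) = x @ concat (map ((!) [x,y,w]) js)"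
        using h(5) by auto
      then have "prefix x y \<or> prefix y x"
        using prefix_same_cases[of x _ y] by (metis prefixI)
      then show False using pxy by blast
    qed
  qed
qed

definition has11 :: "nat list \<Rightarrow> bool" where "has11 w \<longleftrightarrow> (\<exists>u v. w = u @ 1 # 1 # v)"

lemma has11_Nil[simp]: "\<not> has11 []" by (simp add: has11_def)

lemma has11_Cons: "has11 (x # r) \<longleftrightarrow> (x = 1 \<and> r \<noteq> [] \<and> hd r = 1) \<or> has11 r"
proof
  assume "has11 (x # r)"
  then obtain u v where uv: "x # r = u @ 1 # 1 # v" by (auto simp: has11_def)
  show "(x = 1 \<and> r \<noteq> [] \<and> hd r = 1) \<or> has11 r"
  proof (cases u)
    case Nil then show ?thesis using uv by auto
  next
    case (Cons a u') then show ?thesis using uv by (auto simp: has11_def)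
  qed
next
  assume "(x = 1 \<and> r \<noteq> [] \<and> hd r = 1) \<or> has11 r"
  then show "has11 (x # r)"
  proof
    assume h: "x = 1 \<and> r \<noteq> [] \<and> hd r = 1"
    then have "x # r = [] @ 1 # 1 # tl r" by (cases r) auto
    then show ?thesis unfolding has11_def by blast
  next
    assume "has11 r"
    then obtain u v where "r = u @ 1 # 1 # v" by (auto simp: has11_def)
    then have "x # r = (x # u) @ 1 # 1 # v" by simp
    then show ?thesis unfolding has11_def by blast
  qed
qed

lemma has11_0[simp]: "has11 (0 # r) = has11 r" by (simp add: has11_Cons)
lemma has11_10[simp]: "has11 (1 # 0 # r) = has11 r" by (simp add: has11_Cons)
lemma has11_11[simp]: "has11 (1 # 1 # r)" by (simp add: has11_Cons)
lemma has11_10'[simp]: "has11 (Suc 0 # 0 # r) = has11 r" by (simp add: has11_Cons)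
lemma has11_11'[simp]: "has11 (Suc 0 # Suc 0 # r)" by (simp add: has11_Cons)

lemma has11_rev: "has11 (rev w) = has11 w"
proof -
  have "has11 w \<Longrightarrow> has11 (rev w)" for w
  proof -
    assume "has11 w"
    then obtain u v where "w = u @ 1 # 1 # v" by (auto simp: has11_def)
    then have "rev w = rev v @ 1 # 1 # rev u" by simp
    then show ?thesis unfolding has11_def by blast
  qed
  from this[of w] this[of "rev w"] show ?thesis by auto
qed

lemma has11_append: "has11 w \<Longrightarrow> has11 (w @ z)"
  unfolding has11_def by (metis append.assoc append_Cons)

lemma no11_C10:
  assumes "set is \<subseteq> {0,1}" shows "\<not> has11 (concat (map ((!) [[0],[1,0],w]) is))"
  using assms by (induction "is") auto

lemma C10_code:
  assumes "has11 w" shows "is_code [[0],[1,0],w]"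
proof (rule code_G)
  show "w \<noteq> []" using assms by auto
  show "\<not> (\<exists>is z. set is \<subseteq> {0, 1} \<and> concat (map ((!) [[0], [1, 0], w]) is) = w @ z)"
    using no11_C10 has11_append assms by metis
qed auto

lemma parse10:
  "\<not> has11 u \<Longrightarrow> set u \<subseteq> {0,1} \<Longrightarrow> \<exists>is. set is \<subseteq> {0,1} \<and> concat (map ((!) [[0],[1,0],w]) is) = u @ [0]"
proof (induction u rule: length_induct)
  case (1 u)
  show ?case
  proof (cases u)
    case Nil
    then show ?thesis by (intro exI[of _ "[0]"]) simp
  next
    case (Cons x r)
    show ?thesis
    proof (cases "x = 0")
      case True
      then obtain "is" where "set is \<subseteq> {0,1}" "concat (map ((!) [[0],[1,0],w]) is) = r @ [0]"
        using 1 Cons by auto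
      then show ?thesis using True Cons by (intro exI[of _ "0 # is"]) simp
    next
      case False
      then have x1: "x = 1" using 1(3) Cons by auto
      show ?thesis
      proof (cases r)
        case Nil
        then show ?thesis using x1 Cons by (intro exI[of _ "[1]"]) simp
      next
        case (Cons y r')
        then have y0: "y = 0" using 1(2,3) x1 \<open>u = x # r\<close> by auto
        have "\<exists>is. set is \<subseteq> {0,1} \<and> concat (map ((!) [[0],[1,0],w]) is) = r' @ [0]"
          using 1(1)[rule_format, of r'] 1(2,3) Cons \<open>u = x # r\<close> x1 y0 by auto
        then obtain "is" where "set is \<subseteq> {0,1}" "concat (map ((!) [[0],[1,0],w]) is) = r' @ [0]"
          by blast
        then show ?thesis using x1 y0 Cons \<open>u = x # r\<close> by (intro exI[of _ "1 # is"]) simp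
      qed
    qed
  qed
qed

lemma C10_noncode:
  assumes "\<not> has11 w" "set w \<subseteq> {0,1}"
  shows "\<not> is_code [[0],[1,0],w]"
proof
  assume c: "is_code [[0],[1,0],w]"
  obtain "is" where hs: "set is \<subseteq> {0,1}" "concat (map ((!) [[0],[1,0],w]) is) = w @ [0]"
    using parse10[OF assms] by blast
  have "is \<noteq> []" using hs(2) by auto
  then have "[2,0] = is" using c hs unfolding is_code_def
    by (elim allE[of _ "[2,0]"] allE[of _ "is"]) auto
  then show False using hs(1) by auto
qed

lemma C10_iff: "set w \<subseteq> {0,1} \<Longrightarrow> is_code [[0],[1,0],w] = has11 w"
  using C10_code C10_noncode by blast

lemma C01_iff: "set w \<subseteq> {0,1} \<Longrightarrow> is_code [[0],[0,1],w] = has11 w"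
proof -
  assume "set w \<subseteq> {0,1}"
  then have "is_code [[0],[1,0],rev w] = has11 (rev w)" by (intro C10_iff) auto
  moreover have "is_code [[0],[1,0],rev w] = is_code [[0],[0,1],w]"
    using code_rev_iff[of "[[0],[0,1],w]"] by simp
  ultimately show ?thesis by (simp add: has11_rev)
qed

fun inK :: "nat list \<Rightarrow> bool" where
  "inK [] = True"
| "inK [x] = (x = 0)"
| "inK (x # y # r) = (if x = 0 then inK (y # r) else x = 1 \<and> y = 1 \<and> inK r)"

lemma inK_0[simp]: "inK (0 # r) = inK r" by (cases r) auto
lemma inK_11[simp]: "inK (1 # 1 # r) = inK r" by simp
lemma inK_11'[simp]: "inK (Suc 0 # Suc 0 # r) = inK r" by simp

lemma inK_concat:
  assumes "set is \<subseteq> {0,1}" shows "inK (concat (map ((!) [[0],[1,1],w]) is))"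
  using assms by (induction "is") auto

lemma inK_parse:
  "inK u \<Longrightarrow> \<exists>is. set is \<subseteq> {0,1} \<and> concat (map ((!) [[0],[1,1],w]) is) = u"
proof (induction u rule: inK.induct)
  case 1 then show ?case by (intro exI[of _ "[]"]) simp
next
  case (2 x) then show ?case by (intro exI[of _ "[0]"]) simp
next
  case (3 x y r)
  show ?case
  proof (cases "x = 0")
    case True
    then obtain "is" where "set is \<subseteq> {0,1}" "concat (map ((!) [[0],[1,1],w]) is) = y # r"
      using 3 by auto
    then show ?thesis using True by (intro exI[of _ "0 # is"]) simp
  next
    case False
    then obtain "is" where "set is \<subseteq> {0,1}" "concat (map ((!) [[0],[1,1],w]) is) = r"
      using 3 by auto
    then show ?thesis using False 3(3) by (intro exI[of _ "1 # is"]) simp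
  qed
qed

lemma inK_prefix: "inK (w @ z) \<Longrightarrow> inK w \<or> (\<exists>u. w = u @ [1] \<and> inK u)"
proof (induction w arbitrary: z rule: inK.induct)
  case 1 then show ?case by simp
next
  case (2 x) then show ?case
    by (cases z) (auto split: if_splits intro: exI[of _ "[]"])
next
  case (3 x y r)
  show ?case
  proof (cases "x = 0")
    case True
    then have "inK (y # r) \<or> (\<exists>u. y # r = u @ [1] \<and> inK u)" using 3 by auto
    then show ?thesis
    proof
      assume "inK (y # r)" then show ?thesis using True by simp
    next
      assume "\<exists>u. y # r = u @ [1] \<and> inK u"
      then obtain u where "y # r = u @ [1]" "inK u" by blast
      then have "x # y # r = (0 # u) @ [1] \<and> inK (0 # u)" using True by simp
      then show ?thesis by blast
    qed
  next
    case False
    then have xy: "x = 1" "y = 1" "inK (r @ z)" using 3(3) by auto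
    then have "inK r \<or> (\<exists>u. r = u @ [1] \<and> inK u)" using 3 False by auto
    then show ?thesis
    proof
      assume "inK r" then show ?thesis using xy by simp
    next
      assume "\<exists>u. r = u @ [1] \<and> inK u"
      then obtain u where "r = u @ [1]" "inK u" by blast
      then have "x # y # r = (1 # 1 # u) @ [1] \<and> inK (1 # 1 # u)" using xy by simp
      then show ?thesis by blast
    qed
  qed
qed

lemma inK_shape:
  "inK u \<Longrightarrow> (\<exists>k. u = replicate (2*k) 1) \<or> (\<exists>t k. u = t @ 0 # replicate (2*k) 1)"
proof (induction u rule: inK.induct)
  case 1 then show ?case by (intro disjI1 exI[of _ 0]) simp
next
  case (2 x) then show ?case by (intro disjI2 exI[of _ "[]"] exI[of _ 0]) simp
next
  case (3 x y r)
  show ?case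
  proof (cases "x = 0")
    case True
    then have "(\<exists>k. y # r = replicate (2*k) 1) \<or> (\<exists>t k. y # r = t @ 0 # replicate (2*k) 1)"
      using 3 by auto
    then show ?thesis
    proof
      assume "\<exists>k. y # r = replicate (2*k) 1"
      then obtain k where "y # r = replicate (2*k) 1" by blast
      then have "x # y # r = [] @ 0 # replicate (2*k) 1" using True by simp
      then show ?thesis by blast
    next
      assume "\<exists>t k. y # r = t @ 0 # replicate (2*k) 1"
      then obtain t k where "y # r = t @ 0 # replicate (2*k) 1" by blast
      then have "x # y # r = (0 # t) @ 0 # replicate (2*k) 1" using True by simp
      then show ?thesis by blast
    qed
  next
    case False
    then have xy: "x = 1" "y = 1" "inK r" using 3(3) by auto
    then have "(\<exists>k. r = replicate (2*k) 1) \<or> (\<exists>t k. r = t @ 0 # replicate (2*k) 1)"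
      using 3 False by auto
    then show ?thesis
    proof
      assume "\<exists>k. r = replicate (2*k) 1"
      then obtain k where "r = replicate (2*k) 1" by blast
      then have "x # y # r = replicate (2*(Suc k)) 1" using xy by simp
      then show ?thesis by blast
    next
      assume "\<exists>t k. r = t @ 0 # replicate (2*k) 1"
      then obtain t k where "r = t @ 0 # replicate (2*k) 1" by blast
      then have "x # y # r = (1 # 1 # t) @ 0 # replicate (2*k) 1" using xy by simp
      then show ?thesis by blast
    qed
  qed
qed

definition lead :: "nat list \<Rightarrow> nat" where "lead s = length (takeWhile (\<lambda>x. x = 1) s)"

lemma lead_rep: "lead (replicate n 1 @ 0 # X) = n"
  by (induction n) (auto simp: lead_def)

lemma lead_Q:
  assumes "set js \<subseteq> {..<3}" and hv: "\<And>X. lead (v @ X) = m"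
  shows "even (lead (concat (map ((!) [[0],[1,1],v]) js))) \<or> m \<le> lead (concat (map ((!) [[0],[1,1],v]) js))"
  using assms(1)
proof (induction js)
  case Nil then show ?case by (simp add: lead_def)
next
  case (Cons j js)
  have "j = 0 \<or> j = 1 \<or> j = 2" using Cons.prems by auto
  then show ?case
  proof (elim disjE)
    assume "j = 0" then show ?thesis by (simp add: lead_def)
  next
    assume "j = 1" then show ?thesis using Cons by (auto simp: lead_def)
  next
    assume "j = 2" then show ?thesis using hv by simp
  qed
qed

lemma L_gen:
  assumes hv: "\<And>X. lead (v @ X) = m" and m: "odd m" and vne: "v \<noteq> []"
  shows "is_code [[0],[1,1],v]"
proof (rule code_intro)
  show "\<forall>i<length [[0],[1,1],v]. [[0],[1,1],v] ! i \<noteq> []"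
    using vne by (auto simp: less_Suc_eq nth_Cons')
  fix i j "is" js
  assume h: "i < length [[0],[1,1],v]" "j < length [[0],[1,1],v]"
    "set is \<subseteq> {..<length [[0],[1,1],v]}" "set js \<subseteq> {..<length [[0],[1,1],v]}"
    "[[0],[1,1],v] ! i @ concat (map ((!) [[0],[1,1],v]) is) = [[0],[1,1],v] ! j @ concat (map ((!) [[0],[1,1],v]) js)"
  define X where "X = concat (map ((!) [[0],[1,1],v]) is)"
  define Y where "Y = concat (map ((!) [[0],[1,1],v]) js)"
  have l11: "lead ([1,1] @ Z) = 2 + lead Z" for Z by (simp add: lead_def)
  have l0: "lead ([0] @ Z) = 0" for Z by (simp add: lead_def)
  have Qi: "even (lead X) \<or> m \<le> lead X" unfolding X_def using lead_Q[OF _ hv] h(3) by (simp add: eval_nat_numeral)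
  have Qj: "even (lead Y) \<or> m \<le> lead Y" unfolding Y_def using lead_Q[OF _ hv] h(4) by (simp add: eval_nat_numeral)
  have eq: "lead ([[0],[1,1],v] ! i @ X) = lead ([[0],[1,1],v] ! j @ Y)" using h(5) X_def Y_def by simp
  have i3: "i = 0 \<or> i = 1 \<or> i = 2" "j = 0 \<or> j = 1 \<or> j = 2" using h(1,2) by auto
  have val: "lead ([[0],[1,1],v] ! k @ Z) = (if k = 0 then 0 else if k = 1 then 2 + lead Z else m)"
    if "k = 0 \<or> k = 1 \<or> k = 2" for k Z
    using that l11 l0 hv by auto
  show "i = j"
  proof (rule ccontr)
    assume ij: "i \<noteq> j"
    have E: "(if i = 0 then 0 else if i = 1 then 2 + lead X else m) = (if j = 0 then 0 else if j = 1 then 2 + lead Y else m)"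
      using eq unfolding val[OF i3(1)] val[OF i3(2)] .
    have m0: "m \<noteq> 0" using m odd_pos by auto
    have a1: "2 + lead X \<noteq> m" using Qi m by auto
    have a2: "2 + lead Y \<noteq> m" using Qj m by auto
    show False using i3 ij E m0 a1 a2 by (elim disjE) simp_all
  qed
qed

lemma L_code: "is_code [[0],[1,1],replicate (2*k+1) 1 @ 0 # t]"
proof (rule L_gen[where m = "2*k+1"])
  fix X show "lead ((replicate (2*k+1) 1 @ 0 # t) @ X) = 2*k+1"
    using lead_rep[of "2*k+1" "t @ X"] by simp
qed simp_all

lemma L'_code: "is_code [[0],[1,1],t @ 0 # replicate (2*k+1) 1]"
proof -
  have "is_code [[0],[1,1],replicate (2*k+1) 1 @ 0 # rev t]" by (rule L_code)
  moreover have "map rev [[0],[1,1],t @ 0 # replicate (2*k+1) 1] = [[0],[1,1],replicate (2*k+1) 1 @ 0 # rev t]"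
    by (simp add: replicate_append_same)
  ultimately show ?thesis using code_rev_iff by metis
qed

lemma rep_snoc: "replicate n x @ [x] = replicate (Suc n) x"
  by (induction n) auto

lemma D_code:
  assumes "w \<noteq> []" "\<not> inK w" "w \<noteq> replicate (length w) 1"
  shows "is_code [[0],[1,1],w]"
proof (cases "\<exists>is z. set is \<subseteq> {0,1} \<and> concat (map ((!) [[0],[1,1],w]) is) = w @ z")
  case False
  then show ?thesis using assms by (intro code_G) auto
next
  case True
  then obtain "is" z where "set is \<subseteq> {0,1}" "concat (map ((!) [[0],[1,1],w]) is) = w @ z" by blast
  then have "inK (w @ z)" using inK_concat by metis
  then obtain u where u: "w = u @ [1]" "inK u" using inK_prefix assms(2) by blast
  from inK_shape[OF u(2)] show ?thesis
  proof
    assume "\<exists>k. u = replicate (2*k) 1"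
    then obtain k where "u = replicate (2*k) 1" by blast
    then have "w = replicate (length w) 1" using u(1) by (simp add: rep_snoc)
    then show ?thesis using assms(3) by simp
  next
    assume "\<exists>t k. u = t @ 0 # replicate (2*k) 1"
    then obtain t k where "u = t @ 0 # replicate (2*k) 1" by blast
    then have "w = t @ 0 # replicate (2*k+1) 1" using u(1) by (simp add: rep_snoc)
    then show ?thesis using L'_code by simp
  qed
qed

lemma D_noncode1:
  assumes "inK w" "w \<noteq> []" shows "\<not> is_code [[0],[1,1],w]"
proof
  assume c: "is_code [[0],[1,1],w]"
  obtain "is" where hs: "set is \<subseteq> {0,1}" "concat (map ((!) [[0],[1,1],w]) is) = w"
    using inK_parse[OF assms(1)] by blast
  have "is \<noteq> []" using hs(2) assms(2) by auto
  then have "[2] = is" using c hs unfolding is_code_def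
    by (elim allE[of _ "[2]"] allE[of _ "is"]) auto
  then show False using hs(1) by auto
qed

lemma concat_rep11: "concat (replicate n [1,1]) = replicate (2*n) (1::nat)"
  by (induction n) auto

lemma D_noncode2:
  assumes "odd n" shows "\<not> is_code [[0],[1,1],replicate n 1]"
proof
  assume c: "is_code [[0],[1,1],replicate n 1]"
  have n0: "n \<noteq> 0" using assms odd_pos by auto
  have mr: "map ((!) [[0],[1,1],replicate n (1::nat)]) (replicate n 1) = replicate n [1,1]"
    by (simp add: map_replicate_const)
  have "concat (map ((!) [[0],[1,1],replicate n (1::nat)]) (replicate n 1)) = replicate (2*n) 1"
    unfolding mr using concat_rep11[of n] by simp
  moreover have "concat (map ((!) [[0],[1,1],replicate n (1::nat)]) [2,2]) = replicate (2*n) 1"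
    by (simp add: replicate_add[symmetric] mult_2)
  ultimately have "replicate n (1::nat) = [2,2]" using c n0 unfolding is_code_def
    by (elim allE[of _ "replicate n 1"] allE[of _ "[2,2]"]) auto
  then show False using n0 by (cases n) auto
qed

lemma inK_rep: "inK (replicate n 1) = even n"
proof (induction n rule: nat_less_induct)
  case (1 n)
  show ?case
  proof (cases n)
    case 0 then show ?thesis by simp
  next
    case (Suc m)
    show ?thesis
    proof (cases m)
      case 0 then show ?thesis using Suc by simp
    next
      case (Suc m')
      then show ?thesis using 1 \<open>n = Suc m\<close> by simp
    qed
  qed
qed

lemma D_iff:
  assumes "w \<noteq> []"
  shows "is_code [[0],[1,1],w] = (\<not> inK w \<and> w \<noteq> replicate (length w) 1)"
proof
  assume c: "is_code [[0],[1,1],w]"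
  have "\<not> inK w" using D_noncode1 c assms by blast
  moreover have "w \<noteq> replicate (length w) 1"
  proof
    assume r: "w = replicate (length w) 1"
    show False
    proof (cases "even (length w)")
      case True then show False using \<open>\<not> inK w\<close> r inK_rep by metis
    next
      case False then show False using D_noncode2 c r by metis
    qed
  qed
  ultimately show "\<not> inK w \<and> w \<noteq> replicate (length w) 1" by blast
next
  assume "\<not> inK w \<and> w \<noteq> replicate (length w) 1"
  then show "is_code [[0],[1,1],w]" using D_code assms by blast
qed




definition W :: "nat \<Rightarrow> nat list set" where "W n = {xs. set xs \<subseteq> {..<2} \<and> length xs = n}"

lemma W_fin[simp]: "finite (W n)" unfolding W_def by (rule finite_lists_length_eq) simp
lemma W_card: "card (W n) = 2 ^ n" unfolding W_def by (subst card_lists_length_eq) simp_all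

lemma lt2: "(x::nat) < 2 \<longleftrightarrow> x = 0 \<or> x = 1" by auto

lemma W0: "W 0 = {[]}" by (auto simp: W_def)
lemma W1: "W 1 = {[0],[1]}" by (auto simp: W_def length_Suc_conv lt2)
lemma W1': "W (Suc 0) = {[0],[1]}" using W1 by simp
lemma W2: "W 2 = {[0,0],[0,1],[1,0],[1,1]}"
  by (auto simp: W_def length_Suc_conv lt2 numeral_2_eq_2)

lemma W_SS: "w \<in> W (Suc (Suc n)) \<longleftrightarrow> (\<exists>a b r. w = a # b # r \<and> (a = 0 \<or> a = 1) \<and> (b = 0 \<or> b = 1) \<and> r \<in> W n)"
  by (auto simp: W_def length_Suc_conv lt2)

lemma W_S: "w \<in> W (Suc n) \<longleftrightarrow> (\<exists>a r. w = a # r \<and> (a = 0 \<or> a = 1) \<and> r \<in> W n)"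
  by (auto simp: W_def length_Suc_conv lt2)

lemma A_rec: "{w\<in>W (Suc (Suc n)). \<not> has11 w} =
   (Cons 0) ` {w\<in>W (Suc n). \<not> has11 w} \<union> (\<lambda>w. 1 # 0 # w) ` {w\<in>W n. \<not> has11 w}"
proof (rule set_eqI, rule iffI)
  fix w assume "w \<in> {w\<in>W (Suc (Suc n)). \<not> has11 w}"
  then obtain a b r where w: "w = a # b # r" "a = 0 \<or> a = 1" "b = 0 \<or> b = 1" "r \<in> W n" "\<not> has11 w"
    using W_SS by auto
  show "w \<in> (Cons 0) ` {w\<in>W (Suc n). \<not> has11 w} \<union> (\<lambda>w. 1 # 0 # w) ` {w\<in>W n. \<not> has11 w}"
  proof (cases "a = 0")
    case True
    then have "b # r \<in> {w\<in>W (Suc n). \<not> has11 w}" using w W_S by auto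
    then show ?thesis using w True by auto
  next
    case False
    then have "a = 1" "b = 0" using w by auto
    then show ?thesis using w by auto
  qed
next
  fix w assume "w \<in> (Cons 0) ` {w\<in>W (Suc n). \<not> has11 w} \<union> (\<lambda>w. 1 # 0 # w) ` {w\<in>W n. \<not> has11 w}"
  then show "w \<in> {w\<in>W (Suc (Suc n)). \<not> has11 w}"
    by (auto simp: W_S W_SS)
qed

lemma A_card: "card {w\<in>W n. \<not> has11 w} = fib (n + 2)"
proof (induction n rule: fib.induct)
  case 1
  have "{w\<in>W 0. \<not> has11 w} = {[]}" by (auto simp: W0)
  then show ?case by simp
next
  case 2
  have "{w\<in>W 1. \<not> has11 w} = {[0],[1]}" by (auto simp: W1' has11_Cons)
  then show ?case by (simp add: numeral_3_eq_3)
next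
  case (3 n)
  have d: "(Cons 0) ` {w\<in>W (Suc n). \<not> has11 w} \<inter> (\<lambda>w. 1 # 0 # w) ` {w\<in>W n. \<not> has11 w} = {}"
    by auto
  have "card {w\<in>W (Suc (Suc n)). \<not> has11 w} =
     card ((Cons 0) ` {w\<in>W (Suc n). \<not> has11 w}) + card ((\<lambda>w. 1 # 0 # w) ` {w\<in>W n. \<not> has11 w})"
    unfolding A_rec by (rule card_Un_disjoint) (auto simp: d)
  also have "\<dots> = card {w\<in>W (Suc n). \<not> has11 w} + card {w\<in>W n. \<not> has11 w}"
    by (subst card_image, simp add: inj_on_def)+ simp
  also have "\<dots> = fib (Suc (Suc n) + 2)" using 3 by simp
  finally show ?case .
qed

lemma M_rec: "{w\<in>W (Suc (Suc n)). inK w} =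
   (Cons 0) ` {w\<in>W (Suc n). inK w} \<union> (\<lambda>w. 1 # 1 # w) ` {w\<in>W n. inK w}"
proof (rule set_eqI, rule iffI)
  fix w assume "w \<in> {w\<in>W (Suc (Suc n)). inK w}"
  then obtain a b r where w: "w = a # b # r" "a = 0 \<or> a = 1" "b = 0 \<or> b = 1" "r \<in> W n" "inK w"
    using W_SS by auto
  show "w \<in> (Cons 0) ` {w\<in>W (Suc n). inK w} \<union> (\<lambda>w. 1 # 1 # w) ` {w\<in>W n. inK w}"
  proof (cases "a = 0")
    case True
    then have "b # r \<in> {w\<in>W (Suc n). inK w}" using w W_S by auto
    then show ?thesis using w True by auto
  next
    case False
    then have "a = 1" "b = 1" using w by (auto split: if_splits)
    then show ?thesis using w by auto
  qed
next
  fix w assume "w \<in> (Cons 0) ` {w\<in>W (Suc n). inK w} \<union> (\<lambda>w. 1 # 1 # w) ` {w\<in>W n. inK w}"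
  then show "w \<in> {w\<in>W (Suc (Suc n)). inK w}"
    by (auto simp: W_S W_SS)
qed

lemma M_card: "card {w\<in>W n. inK w} = fib (n + 1)"
proof (induction n rule: fib.induct)
  case 1
  have "{w\<in>W 0. inK w} = {[]}" by (auto simp: W0)
  then show ?case by simp
next
  case 2
  have "{w\<in>W 1. inK w} = {[0]}" by (auto simp: W1')
  then show ?case by (simp add: numeral_2_eq_2)
next
  case (3 n)
  have d: "(Cons 0) ` {w\<in>W (Suc n). inK w} \<inter> (\<lambda>w. 1 # 1 # w) ` {w\<in>W n. inK w} = {}"
    by auto
  have "card {w\<in>W (Suc (Suc n)). inK w} =
     card ((Cons 0) ` {w\<in>W (Suc n). inK w}) + card ((\<lambda>w. 1 # 1 # w) ` {w\<in>W n. inK w})"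
    unfolding M_rec by (rule card_Un_disjoint) (auto simp: d)
  also have "\<dots> = card {w\<in>W (Suc n). inK w} + card {w\<in>W n. inK w}"
    by (subst card_image, simp add: inj_on_def)+ simp
  also have "\<dots> = fib (Suc (Suc n) + 1)" using 3 by simp
  finally show ?case .
qed

lemma card_compl: "card {w\<in>W n. P w} + card {w\<in>W n. \<not> P w} = 2 ^ n"
proof -
  have "card {w\<in>W n. P w} + card {w\<in>W n. \<not> P w} = card ({w\<in>W n. P w} \<union> {w\<in>W n. \<not> P w})"
    by (rule card_Un_disjoint[symmetric]) auto
  also have "{w\<in>W n. P w} \<union> {w\<in>W n. \<not> P w} = W n" by auto
  finally show ?thesis by (simp add: W_card)
qed




lemma W_set01: "w \<in> W n \<Longrightarrow> set w \<subseteq> {0,1}" by (auto simp: W_def)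
lemma W_len: "w \<in> W n \<Longrightarrow> length w = n" by (auto simp: W_def)

lemma swSuc0[simp]: "sw (Suc 0) = 0" by (simp add: sw_def)
lemma map_sw_comp[simp]: "map (sw \<circ> sw) x = x" by (simp add: comp_def)

lemma sw_lt2: "x < 2 \<Longrightarrow> sw x < 2" by (auto simp: sw_def)

lemma W_sw: "w \<in> W n \<Longrightarrow> map sw w \<in> W n"
  by (auto simp: W_def sw_lt2)

lemma card_sw: "card {w \<in> W n. Q (map sw w)} = card {w\<in>W n. Q w}"
proof -
  have "{w \<in> W n. Q (map sw w)} = map sw ` {w\<in>W n. Q w}"
  proof (rule set_eqI, rule iffI)
    fix w assume "w \<in> {w \<in> W n. Q (map sw w)}"
    then have "map sw w \<in> {w\<in>W n. Q w}" using W_sw by auto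
    then show "w \<in> map sw ` {w\<in>W n. Q w}" by (metis image_eqI map_sw_sw)
  next
    fix w assume "w \<in> map sw ` {w\<in>W n. Q w}"
    then show "w \<in> {w \<in> W n. Q (map sw w)}" using W_sw by auto
  qed
  moreover have "inj_on (map sw) X" for X by (metis inj_on_def map_sw_sw)
  ultimately show ?thesis by (simp add: card_image)
qed

lemma code_swap1: "is_code [[1],b,w] = is_code [[0], map sw b, map sw w]"
  using code_sw_iff[of "[[1],b,w]"] by simp

lemma pcode_swap1: "is_prefix_code [[1],b,w] = is_prefix_code [[0], map sw b, map sw w]"
  using prefix_code_sw_iff[of "[[1],b,w]"] by simp

lemma not_code00: "\<not> is_code [[0],[0,0],w]"
proof
  assume c: "is_code [[0],[0,0],w]"
  have "[0,0] = [1::nat]" using c unfolding is_code_def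
    by (elim allE[of _ "[0,0]"] allE[of _ "[1]"]) auto
  then show False by simp
qed

lemma cnt00: "card {w\<in>W c. is_code [[0],[0,0],w]} = 0"
  using not_code00 by simp

lemma cnt01: "card {w\<in>W c. is_code [[0],[0,1],w]} + fib (c+2) = 2^c"
proof -
  have "{w\<in>W c. is_code [[0],[0,1],w]} = {w\<in>W c. has11 w}" using C01_iff W_set01 by blast
  then show ?thesis using card_compl[of c has11] A_card[of c] by simp
qed

lemma cnt10: "card {w\<in>W c. is_code [[0],[1,0],w]} + fib (c+2) = 2^c"
proof -
  have "{w\<in>W c. is_code [[0],[1,0],w]} = {w\<in>W c. has11 w}" using C10_iff W_set01 by blast
  then show ?thesis using card_compl[of c has11] A_card[of c] by simp
qed

lemma rep_W: "replicate c 1 \<in> W c" by (auto simp: W_def)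

lemma cnt11: assumes "c \<ge> 1"
  shows "card {w\<in>W c. is_code [[0],[1,1],w]} + (fib (c+1) + c mod 2) = 2^c"
proof -
  have e: "is_code [[0],[1,1],w] = (\<not> (inK w \<or> w = replicate c 1))" if "w \<in> W c" for w
  proof -
    have l: "length w = c" using W_len that by blast
    then have "w \<noteq> []" using assms by auto
    then show ?thesis using D_iff[of w] l by simp
  qed
  have "{w\<in>W c. is_code [[0],[1,1],w]} = {w\<in>W c. \<not> (inK w \<or> w = replicate c 1)}"
    using e by blast
  moreover have "card {w\<in>W c. inK w \<or> w = replicate c 1} = fib (c+1) + c mod 2"
  proof (cases "even c")
    case True
    then have "inK (replicate c 1)" using inK_rep by simp
    then have "{w\<in>W c. inK w \<or> w = replicate c 1} = {w\<in>W c. inK w}" by auto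
    then show ?thesis using M_card True by simp
  next
    case False
    then have "{w\<in>W c. inK w \<or> w = replicate c 1} = insert (replicate c 1) {w\<in>W c. inK w}"
      using rep_W by auto
    moreover have "replicate c 1 \<notin> {w\<in>W c. inK w}" using inK_rep False by auto
    ultimately show ?thesis using M_card False by (simp add: odd_iff_mod_2_eq_one)
  qed
  ultimately show ?thesis using card_compl[of c "\<lambda>w. inK w \<or> w = replicate c 1"] by simp
qed

lemma lt3: "(i::nat) < 3 \<longleftrightarrow> i = 0 \<or> i = 1 \<or> i = 2" by auto

lemma UD_decomp:
  "{C \<in> UD 2 [1,2,c]. P C} = (\<lambda>(a,b,w). [a,b,w]) ` (SIGMA a:W 1. SIGMA b:W 2. {w\<in>W c. is_code [a,b,w] \<and> P [a,b,w]})"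
proof (rule set_eqI, rule iffI)
  fix C assume "C \<in> {C \<in> UD 2 [1,2,c]. P C}"
  then have h: "length C = 3" "\<forall>i<3. length (C ! i) = [1,2,c] ! i \<and> set (C ! i) \<subseteq> {..<2}"
    "is_code C" "P C" unfolding UD_def by auto
  obtain a r1 where r1: "C = a # r1" using h(1) by (cases C) auto
  obtain b r2 where r2: "r1 = b # r2" using h(1) r1 by (cases r1) auto
  obtain w where r3: "r2 = [w]" using h(1) r1 r2 by (cases r2) auto
  have C: "C = [a,b,w]" using r1 r2 r3 by simp
  have h0: "length a = 1 \<and> set a \<subseteq> {..<2}" using h(2)[rule_format, of 0] C by simp
  have h1: "length b = 2 \<and> set b \<subseteq> {..<2}" using h(2)[rule_format, of 1] C by simp
  have h2: "length w = c \<and> set w \<subseteq> {..<2}" using h(2)[rule_format, of 2] C by simp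
  have "a \<in> W 1" "b \<in> W 2" "w \<in> W c" using h0 h1 h2 unfolding W_def by auto
  moreover have "is_code [a,b,w] \<and> P [a,b,w]" using h C by simp
  ultimately have "(a,b,w) \<in> (SIGMA a:W 1. SIGMA b:W 2. {w\<in>W c. is_code [a,b,w] \<and> P [a,b,w]})"
    by simp
  then show "C \<in> (\<lambda>(a,b,w). [a,b,w]) ` (SIGMA a:W 1. SIGMA b:W 2. {w\<in>W c. is_code [a,b,w] \<and> P [a,b,w]})"
    using C by (metis (no_types, lifting) case_prod_conv image_eqI)
next
  fix C assume "C \<in> (\<lambda>(a,b,w). [a,b,w]) ` (SIGMA a:W 1. SIGMA b:W 2. {w\<in>W c. is_code [a,b,w] \<and> P [a,b,w]})"
  then obtain a b w where C: "C = [a,b,w]" "a \<in> W 1" "b \<in> W 2" "w \<in> W c" "is_code [a,b,w]" "P [a,b,w]"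
    by auto
  have "\<forall>i<3. length (C ! i) = [1,2,c] ! i \<and> set (C ! i) \<subseteq> {..<2}"
    unfolding lt3 using C(1-4) unfolding W_def by auto
  then show "C \<in> {C \<in> UD 2 [1,2,c]. P C}"
    unfolding UD_def using C by simp
qed

lemma UD_card:
  "card {C \<in> UD 2 [1,2,c]. P C} = (\<Sum>a\<in>W 1. \<Sum>b\<in>W 2. card {w\<in>W c. is_code [a,b,w] \<and> P [a,b,w]})"
proof -
  have inj: "inj_on (\<lambda>(a,b,w). [a,b,w]) X" for X :: "(nat list \<times> nat list \<times> nat list) set"
    by (auto simp: inj_on_def)
  show ?thesis unfolding UD_decomp
    by (subst card_image[OF inj]) (simp add: card_SigmaI)
qed




lemma swap_cnt: "card {w\<in>W c. is_code [[1],b,w]} = card {w\<in>W c. is_code [[0],map sw b,w]}"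
  using card_sw[of c "\<lambda>u. is_code [[0], map sw b, u]"] code_swap1 by simp

lemma swap_pcnt: "card {w\<in>W c. is_prefix_code [[1],b,w]} = card {w\<in>W c. is_prefix_code [[0],map sw b,w]}"
  using card_sw[of c "\<lambda>u. is_prefix_code [[0], map sw b, u]"] pcode_swap1 by simp

lemma fib4: "fib (c+4) = 2 * fib (c+2) + fib (c+1)"
  by (simp add: eval_nat_numeral)

lemma UD_total:
  assumes "c \<ge> 1"
  shows "int (card (UD 2 [1,2,c])) = 3 * 2 ^ (c + 1) - 2 * int (fib (c + 4)) - 2 * int (c mod 2)"
proof -
  have "card (UD 2 [1,2,c]) = card {C\<in>UD 2 [1,2,c]. True}" by simp
  also have "\<dots> = (\<Sum>a\<in>W 1. \<Sum>b\<in>W 2. card {w\<in>W c. is_code [a,b,w]})"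
    using UD_card[of c "\<lambda>_. True"] by simp
  also have "\<dots> = 2 * (card {w\<in>W c. is_code [[0],[0,1],w]} + card {w\<in>W c. is_code [[0],[1,0],w]}
                    + card {w\<in>W c. is_code [[0],[1,1],w]})"
    by (simp add: W1' W2 swap_cnt[simplified] cnt00)
  finally have e: "card (UD 2 [1,2,c]) = \<dots>" .
  define a1 where "a1 = card {w\<in>W c. is_code [[0],[0,1],w]}"
  define a2 where "a2 = card {w\<in>W c. is_code [[0],[1,0],w]}"
  define a3 where "a3 = card {w\<in>W c. is_code [[0],[1,1],w]}"
  define F2 where "F2 = fib (c+2)"
  define F1 where "F1 = fib (c+1)"
  define F4 where "F4 = fib (c+4)"
  define r where "r = c mod 2"
  define P where "P = (2::nat) ^ c"
  have h1: "a1 + F2 = P" using cnt01[of c] unfolding a1_def F2_def P_def .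
  have h2: "a2 + F2 = P" using cnt10[of c] unfolding a2_def F2_def P_def .
  have h3: "a3 + (F1 + r) = P" using cnt11[OF assms] unfolding a3_def F1_def r_def P_def .
  have h4: "F4 = 2 * F2 + F1" using fib4[of c] unfolding F4_def F2_def F1_def .
  have e': "card (UD 2 [1,2,c]) = 2 * (a1 + a2 + a3)" using e unfolding a1_def a2_def a3_def .
  have p: "(2::int) ^ (c+1) = 2 * int P" unfolding P_def by simp
  have "int (card (UD 2 [1,2,c])) = 3 * 2 ^ (c + 1) - 2 * int F4 - 2 * int r"
  proof -
    have i1: "int a1 + int F2 = int P" by (simp add: h1[symmetric])
    have i2: "int a2 + int F2 = int P" by (simp add: h2[symmetric])
    have i3: "int a3 + int F1 + int r = int P" by (simp add: h3[symmetric])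
    have i4: "int F4 = 2 * int F2 + int F1" by (simp add: h4)
    have i5: "int (card (UD 2 [1,2,c])) = 2 * (int a1 + int a2 + int a3)" unfolding e' by simp
    have gen: "\<And>x1 x2 x3 f1 f2 f4 rr pp :: int. x1 + f2 = pp \<Longrightarrow> x2 + f2 = pp \<Longrightarrow> x3 + f1 + rr = pp
       \<Longrightarrow> f4 = 2 * f2 + f1 \<Longrightarrow> 2 * (x1 + x2 + x3) = 3 * (2 * pp) - 2 * f4 - 2 * rr"
      by arith
    show ?thesis unfolding p i5 by (rule gen[OF i1 i2 i3 i4])
  qed
  then show ?thesis unfolding F4_def r_def .
qed

lemma pc3: "is_prefix_code [x,y,w] \<longleftrightarrow>
   \<not> prefix x y \<and> \<not> prefix y x \<and> \<not> prefix x w \<and> \<not> prefix w x \<and> \<not> prefix y w \<and> \<not> prefix w y"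
  by (auto simp: is_prefix_code_def All_less_Suc)

lemma pcc:
  assumes "c \<ge> 1" "a \<noteq> []" "b \<noteq> []"
  shows "{w\<in>W c. is_code [a,b,w] \<and> is_prefix_code [a,b,w]} = {w\<in>W c. is_prefix_code [a,b,w]}"
proof -
  have "is_code [a,b,w]" if "w \<in> W c" "is_prefix_code [a,b,w]" for w
  proof (rule prefix_code_code[OF that(2)])
    have "w \<noteq> []" using W_len[OF that(1)] assms(1) by auto
    then show "\<forall>i<length [a, b, w]. [a, b, w] ! i \<noteq> []" using assms by (auto simp: All_less_Suc)
  qed
  then show ?thesis by blast
qed

lemma pcnt_zero:
  "card {w\<in>W c. is_prefix_code [[0],[0,0],w]} = 0" "card {w\<in>W c. is_prefix_code [[0],[0,1],w]} = 0"
  by (simp_all add: pc3)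

lemma pcnt10:
  assumes "c = Suc (Suc n)"
  shows "card {w\<in>W c. is_prefix_code [[0],[1,0],w]} = 2 ^ n"
proof -
  have "{w\<in>W c. is_prefix_code [[0],[1,0],w]} = (\<lambda>r. 1 # 1 # r) ` W n"
    unfolding assms by (auto simp: W_SS pc3)
  then show ?thesis by (simp add: card_image inj_on_def W_card)
qed

lemma pcnt11:
  assumes "c = Suc (Suc n)"
  shows "card {w\<in>W c. is_prefix_code [[0],[1,1],w]} = 2 ^ n"
proof -
  have "{w\<in>W c. is_prefix_code [[0],[1,1],w]} = (\<lambda>r. 1 # 0 # r) ` W n"
    unfolding assms by (auto simp: W_SS pc3)
  then show ?thesis by (simp add: card_image inj_on_def W_card)
qed

lemma PR_total:
  assumes "c = Suc (Suc n)"
  shows "card (PR 2 [1,2,c]) = 2 ^ c"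
proof -
  have c1: "c \<ge> 1" "Suc 0 \<le> c" using assms by simp_all
  have "card (PR 2 [1,2,c]) = card {C\<in>UD 2 [1,2,c]. is_prefix_code C}" by (simp add: PR_def)
  also have "\<dots> = (\<Sum>a\<in>W 1. \<Sum>b\<in>W 2. card {w\<in>W c. is_code [a,b,w] \<and> is_prefix_code [a,b,w]})"
    by (rule UD_card)
  also have "\<dots> = (\<Sum>a\<in>W 1. \<Sum>b\<in>W 2. card {w\<in>W c. is_prefix_code [a,b,w]})"
    by (intro sum.cong refl, subst pcc) (auto simp: c1 W1' W2)
  also have "\<dots> = 2 * (card {w\<in>W c. is_prefix_code [[0],[1,0],w]} + card {w\<in>W c. is_prefix_code [[0],[1,1],w]})"
    by (simp add: W1' W2 swap_pcnt[simplified] pcnt_zero[simplified])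
  also have "\<dots> = 2 ^ c" using pcnt10[OF assms] pcnt11[OF assms] assms by simp
  finally show ?thesis .
qed

theorem mainTheorem13:
  shows "(\<forall>c::nat. c \<ge> 1 \<longrightarrow>
            int (card (UD 2 [1, 2, c])) =
              3 * 2 ^ (c + 1) - 2 * int (fib (c + 4)) - 2 * int (c mod 2))
       \<and> (\<forall>c::nat. c \<ge> 2 \<longrightarrow>
            rho 2 [1, 2, c] =
              2 ^ c / (3 * 2 ^ (c + 1) - 2 * real (fib (c + 4)) - 2 * real (c mod 2)))"
proof (intro conjI allI impI)
  fix c :: nat assume "c \<ge> 1"
  then show "int (card (UD 2 [1, 2, c])) = 3 * 2 ^ (c + 1) - 2 * int (fib (c + 4)) - 2 * int (c mod 2)"
    by (rule UD_total)
next
  fix c :: nat assume c2: "c \<ge> 2"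
  then obtain n where n: "c = Suc (Suc n)" by (metis add_2_eq_Suc le_Suc_ex)
  have u: "int (card (UD 2 [1, 2, c])) = 3 * 2 ^ (c + 1) - 2 * int (fib (c + 4)) - 2 * int (c mod 2)"
    using c2 by (intro UD_total) simp
  have "real (card (UD 2 [1, 2, c])) = real_of_int (int (card (UD 2 [1, 2, c])))" by simp
  also have "\<dots> = 3 * 2 ^ (c + 1) - 2 * real (fib (c + 4)) - 2 * real (c mod 2)"
    unfolding u by simp
  finally have ur: "real (card (UD 2 [1, 2, c])) = 3 * 2 ^ (c + 1) - 2 * real (fib (c + 4)) - 2 * real (c mod 2)" .
  show "rho 2 [1, 2, c] = 2 ^ c / (3 * 2 ^ (c + 1) - 2 * real (fib (c + 4)) - 2 * real (c mod 2))"
    unfolding rho_def ur PR_total[OF n] by simp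
qed


end
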